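(* Let ${\cal R}={\cal D}\times[0,N]$ be a cylinder and let ${\mathbf t}$ be a mixed tiling of ${\cal R}$. Let $\kappa$ be the set of unit cubes $[x,x+1]\times[y,y+1]\times[z,z+1]\subseteq{\cal R}$ with $x+y$ even and $\bar\kappa$ the set of those with $x+y$ odd. Then $\operatorname{Tw}_\kappa({\mathbf t})=-\operatorname{Tw}_{\bar\kappa}({\mathbf t})$.
   Context: Unit cubes are $[x,x+1]\times[y,y+1]\times[z,z+1]$, $(x,y,z)\in\mathbb{Z}^3$; the $n$-th floor is $z\in[n,n+1]$. A cylinder is ${\cal R}={\cal D}\times[0,N]$ where ${\cal D}$ is a connected, simply connected finite union of unit squares in the plane. A domino is a union of two unit cubes sharing a face; it is vertical if parallel to the $z$-axis, horizontal otherwise. A horizontal slab is a $2\times2\times1$ box $[x,x+2]\times[y,y+2]\times[z,z+1]$. A mixed tiling of ${\cal R}$ is a tiling of ${\cal R}$ by horizontal slabs and vertical dominoes. Twist of a domino tiling ${\mathbf s}$ of a cubiculated region: for an ordered pair $(d_0,d_1)$ of dominoes of ${\mathbf s}$ with $d_0$ horizontal and parallel to the $y$-axis and $d_1$ vertical, say $d_1$ affects $d_0$ if $d_1$ has a cube on the floor of $d_0$ and the orthogonal projections of the interiors of $d_0,d_1$ onto the plane $x=0$ intersect. In that case the effect is $\pm1$, determined by four binary parameters: whether $d_1$ lies on the $+x$ or $-x$ side of $d_0$; which of the two cubes of $d_0$ (smaller or larger $y$) has the same $y$-range as $d_1$; the parity of the $x$-distance between them; and whether the lower cube of $d_1$ lies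 on the floor of $d_0$ or on the floor below. Changing any one parameter changes the sign, with a fixed global normalization. Otherwise the effect is $0$. $\operatorname{Tw}({\mathbf s})$ is $\frac14$ of the sum of all effects. Transformation: for a set $\kappa$ of cubes of one parity of $x+y$, replace each cube $[x,x+1]\times[y,y+1]\times[z,z+1]$ in $\kappa$ by $\tilde S\times[z,z+1]$, where $\tilde S$ is the square with vertices $(x-\frac12,y+\frac12),(x+\frac12,y-\frac12),(x+\frac32,y+\frac12),(x+\frac12,y+\frac32)$, and delete the other cubes. The union $\tilde{\cal R}_\kappa$ is a cubiculated region after a $45^\circ$ rotation about the $z$-axis and horizontal rescaling. Each horizontal slab of ${\mathbf t}$ contains exactly two cubes of $\kappa$, and it is sent to the domino formed by their two inflated squares. Each vertical domino of ${\mathbf t}$ whose cubes are in $\kappa$ is sent to the vertical domino formed by their inflations. Vertical dominoes with cubes not in $\kappa$ are deleted. This gives a domino tiling $\tilde{\mathbf t}_\kappa$ of $\tilde{\cal R}_\kappa$, and $\operatorname{Tw}_\kappa({\mathbf t}):=\operatorname{Tw}(\tilde{\mathbf t}_\kappa)\in\mathbb{Z}$. *)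

theory Defs
  imports "HOL-Analysis.Analysis"
begin

text \<open>A unit cube [x,x+1]x[y,y+1]x[z,z+1] is represented by its integer corner (x,y,z).
  Regions and tiles are sets of unit cubes.\<close>

type_synonym cube = "int \<times> int \<times> int"

definition unit_square :: "int \<times> int \<Rightarrow> (real \<times> real) set" where
  "unit_square q = {real_of_int (fst q) .. real_of_int (fst q) + 1} \<times>
                   {real_of_int (snd q) .. real_of_int (snd q) + 1}"

definition planar_domain :: "(int \<times> int) set \<Rightarrow> bool" where
  "planar_domain D \<longleftrightarrow> finite D \<and>
     connected (\<Union>q\<in>D. unit_square q) \<and> simply_connected (\<Union>q\<in>D. unit_square q)"

definition cylinder :: "(int \<times> int) set \<Rightarrow> nat \<Rightarrow> cube set" where
  "cylinder D N = {(x, y, z). (x, y) \<in> D \<and> 0 \<le> z \<and> z < int N}"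

definition xdom :: "cube \<Rightarrow> cube set" where
  "xdom p = (case p of (x, y, z) \<Rightarrow> {(x, y, z), (x + 1, y, z)})"
definition ydom :: "cube \<Rightarrow> cube set" where
  "ydom p = (case p of (x, y, z) \<Rightarrow> {(x, y, z), (x, y + 1, z)})"
definition zdom :: "cube \<Rightarrow> cube set" where
  "zdom p = (case p of (x, y, z) \<Rightarrow> {(x, y, z), (x, y, z + 1)})"

definition hslab :: "cube \<Rightarrow> cube set" where
  "hslab p = (case p of (x, y, z) \<Rightarrow>
      {(x, y, z), (x + 1, y, z), (x, y + 1, z), (x + 1, y + 1, z)})"

definition is_tiling :: "cube set set \<Rightarrow> cube set \<Rightarrow> bool" where
  "is_tiling t R \<longleftrightarrow> \<Union> t = R \<and> (\<forall>T\<in>t. \<forall>T'\<in>t. T \<noteq> T' \<longrightarrow> T \<inter> T' = {})"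

definition mixed_tiling :: "cube set set \<Rightarrow> cube set \<Rightarrow> bool" where
  "mixed_tiling t R \<longleftrightarrow> is_tiling t R \<and>
     (\<forall>T\<in>t. (\<exists>p. T = hslab p) \<or> (\<exists>p. T = zdom p))"

text \<open>Effect of the vertical domino zdom p1 on the y-parallel horizontal domino ydom p0.
  The four parameters: side (sign of x1-x0), which cube of d0 shares the y-range of d1,
  parity of the x-distance, and whether the lower cube of d1 is on the floor of d0 or the
  floor below.  Global normalization: effect = -1 when x1 = x0+1, y1 = y0, z1 = z0.\<close>
definition effect :: "cube \<Rightarrow> cube \<Rightarrow> int" where
  "effect p0 p1 = (case p0 of (x0, y0, z0) \<Rightarrow> case p1 of (x1, y1, z1) \<Rightarrow>
     if (z1 = z0 \<or> z1 + 1 = z0) \<and> (y1 = y0 \<or> y1 = y0 + 1)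
     then sgn (x1 - x0) * (-1) ^ (nat ((x1 - x0) mod 2) + (if y1 = y0 then 0 else 1)
                                   + (if z1 = z0 then 0 else 1))
     else 0)"

definition twist :: "cube set set \<Rightarrow> real" where
  "twist s = real_of_int (\<Sum>p0\<in>{p. ydom p \<in> s}. \<Sum>p1\<in>{p. zdom p \<in> s}. effect p0 p1) / 4"

text \<open>Inflation of cubes of one parity class, followed by the 45 degree rotation and
  rescaling: the inflated square of (x,y) becomes the unit square with corner
  (floor((x+y)/2), floor((y-x)/2)).\<close>
definition rot :: "cube \<Rightarrow> cube" where
  "rot p = (case p of (x, y, z) \<Rightarrow> ((x + y) div 2, (y - x) div 2, z))"

definition transform :: "cube set \<Rightarrow> cube set set \<Rightarrow> cube set set" where
  "transform \<kappa> t = (\<lambda>T. rot ` (T \<inter> \<kappa>)) ` {T \<in> t. T \<inter> \<kappa> \<noteq> {}}"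

definition Tw_kappa :: "cube set \<Rightarrow> cube set set \<Rightarrow> real" where
  "Tw_kappa \<kappa> t = twist (transform \<kappa> t)"

definition kappa_even :: "cube set \<Rightarrow> cube set" where
  "kappa_even R = {c \<in> R. case c of (x, y, z) \<Rightarrow> even (x + y)}"
definition kappa_odd :: "cube set \<Rightarrow> cube set" where
  "kappa_odd R = {c \<in> R. case c of (x, y, z) \<Rightarrow> odd (x + y)}"

end

theory Submission
  imports Defs
begin
definition sg :: "int \<Rightarrow> int" where "sg n = (if even n then 1 else -1)"

lemma pow_sg: "(-1::int) ^ nat (m mod 2) = sg m"
  by (cases "even m") (auto simp: sg_def even_iff_mod_2_eq_zero odd_iff_mod_2_eq_one)

lemma effect_alt: "effect (x0,y0,z0) (x1,y1,z1) =
  (if (z1 = z0 \<or> z1 + 1 = z0) \<and> (y1 = y0 \<or> y1 = y0 + 1)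
   then sgn (x1 - x0) * sg (x1 - x0) * (if y1 = y0 then 1 else -1) * (if z1 = z0 then 1 else -1) else 0)"
  unfolding effect_def by (simp add: power_add pow_sg)

definition g0 :: "int \<Rightarrow> int \<Rightarrow> int" where
 "g0 i j = (if j = i + 1 then - sgn i * sg i else if j = i - 1 then sgn (i - 1) * sg (i - 1) else 0)"

lemma EF:
  assumes "odd (a+b+c+d)"
  shows "effect (rot (a+1,b,z)) (rot (c,d,w)) =
     (if w = z then g0 (c-a) (d-b) else if w + 1 = z then - g0 (c-a) (d-b) else 0)"
proof -
  have e: "effect (rot (a+1,b,z)) (rot (c,d,w)) = effect ((a+1+b) div 2, (b-(a+1)) div 2, z) ((c+d) div 2, (d-c) div 2, w)"
    by (simp add: rot_def)
  consider "d - b = c - a + 1" | "d - b = c - a - 1" | "d - b \<noteq> c - a + 1" "d - b \<noteq> c - a - 1" by blast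
  then show ?thesis
  proof cases
    case 1
    have y: "(d-c) div 2 = (b-(a+1)) div 2 + 1" using 1 by presburger
    have x: "(c+d) div 2 - (a+1+b) div 2 = c - a" using 1 by presburger
    show ?thesis unfolding e effect_alt using 1 y x by (simp add: g0_def)
  next
    case 2
    have y: "(d-c) div 2 = (b-(a+1)) div 2" using 2 by presburger
    have x: "(c+d) div 2 - (a+1+b) div 2 = c - a - 1" using 2 by presburger
    show ?thesis unfolding e effect_alt using 2 y x by (simp add: g0_def)
  next
    case 3
    have y: "(d-c) div 2 \<noteq> (b-(a+1)) div 2" "(d-c) div 2 \<noteq> (b-(a+1)) div 2 + 1" using 3 assms by presburger+
    show ?thesis unfolding e effect_alt using 3 y by (simp add: g0_def)
  qed
qed

lemma sg_m1: "sg (n - 1) = - sg n" unfolding sg_def by auto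
lemma sg_neg: "sg (- n) = sg n" unfolding sg_def by auto
definition k0 :: "int \<Rightarrow> int \<Rightarrow> int" where
 "k0 i j = (if 1 \<le> i \<and> 1 \<le> j then (if i < j then sg j else if j < i then - sg i else 0) else 0)"
definition kf :: "int \<Rightarrow> int \<Rightarrow> int" where "kf i j = k0 i j + k0 (-i) (-j)"
definition box :: "int \<Rightarrow> int \<Rightarrow> int" where
 "box i j = kf i j + kf (i-1) j + kf i (j-1) + kf (i-1) (j-1)"

lemma box_g0: "box i j = (if even (i+j) then 0 else g0 i j)"
proof -
  have "j \<ge> i + 2 \<or> j = i + 1 \<or> j = i \<or> j = i - 1 \<or> j \<le> i - 2" by linarith
  moreover have "i \<ge> 2 \<or> i = 1 \<or> i = 0 \<or> i = -1 \<or> i \<le> -2" by linarith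
  moreover have "j \<ge> 2 \<or> j = 1 \<or> j = 0 \<or> j = -1 \<or> j \<le> -2" by linarith
  ultimately show ?thesis
  unfolding box_def kf_def k0_def g0_def
  apply (elim disjE)
  apply (simp_all add: sg_m1 sg_neg sgn_if)
  apply (auto simp: sg_def split: if_splits)
  apply presburger+
  done
qed

definition kk :: "cube \<Rightarrow> cube \<Rightarrow> int" where
  "kk e f = (case e of (a,b,z) \<Rightarrow> case f of (c,d,w) \<Rightarrow> if z = w then kf (c-a) (d-b) else 0)"
definition up :: "cube \<Rightarrow> cube" where "up q = (case q of (a,b,z) \<Rightarrow> (a,b,z+1))"
definition rho :: "cube \<Rightarrow> cube" where "rho q = (case q of (a,b,z) \<Rightarrow> rot (a+1,b,z))"
definition par :: "cube \<Rightarrow> bool" where "par c = (case c of (x,y,z) \<Rightarrow> even (x+y))"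
definition Gq :: "cube \<Rightarrow> cube \<Rightarrow> int" where
  "Gq q v = (\<Sum>e\<in>hslab q. kk e v - kk e (up v))"

lemma kk_sym: "kk e f = kk f e"
  by (cases e; cases f) (simp add: kk_def kf_def)
lemma kk_up: "kk (up e) (up f) = kk e f"
  by (cases e; cases f) (simp add: kk_def up_def)

lemma slab_sum: "(\<Sum>e\<in>hslab (a,b,z). kk e (c,d,w)) = (if z = w then box (c-a) (d-b) else 0)"
  by (simp add: hslab_def kk_def box_def algebra_simps)

lemma Gq_val: "Gq (a,b,z) (c,d,w) = (if even (a+b+c+d) then 0 else
   (if w = z then g0 (c-a) (d-b) else if w + 1 = z then - g0 (c-a) (d-b) else 0))"
proof -
  have "Gq (a,b,z) (c,d,w) = (\<Sum>e\<in>hslab (a,b,z). kk e (c,d,w)) - (\<Sum>e\<in>hslab (a,b,z). kk e (c,d,w+1))"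
    unfolding Gq_def up_def by (simp add: sum_subtractf)
  also have "\<dots> = (if z = w then box (c-a) (d-b) else 0) - (if z = w + 1 then box (c-a) (d-b) else 0)"
    by (simp only: slab_sum)
  finally show ?thesis by (auto simp: box_g0 split: if_splits; presburger)
qed

lemma Gq_effect: "par q \<noteq> par v \<Longrightarrow> effect (rho q) (rot v) = Gq q v"
  by (cases q; cases v) (auto simp: par_def rho_def Gq_val EF)

lemma Gq_zero: "par q = par v \<Longrightarrow> Gq q v = 0"
  by (cases q; cases v) (auto simp: par_def Gq_val; presburger)


lemma hslab_inj: "hslab q = hslab q' \<Longrightarrow> q = q'"
proof -
  assume h: "hslab q = hslab q'"
  obtain a b z where q: "q = (a,b,z)" by (cases q)
  obtain a' b' z' where q': "q' = (a',b',z')" by (cases q')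
  have "q \<in> hslab q" "q' \<in> hslab q'" by (auto simp: hslab_def q q')
  then have "q \<in> hslab q'" "q' \<in> hslab q" using h by auto
  then show ?thesis by (auto simp: hslab_def q q')
qed
lemma zdom_inj: "zdom q = zdom q' \<Longrightarrow> q = q'"
proof -
  assume h: "zdom q = zdom q'"
  obtain a b z where q: "q = (a,b,z)" by (cases q)
  obtain a' b' z' where q': "q' = (a',b',z')" by (cases q')
  have "q \<in> zdom q" "q' \<in> zdom q'" by (auto simp: zdom_def q q')
  then have "q \<in> zdom q'" "q' \<in> zdom q" using h by auto
  then show ?thesis by (auto simp: zdom_def q q')
qed
lemma ydom_inj: "ydom q = ydom q' \<Longrightarrow> q = q'"
proof -
  assume h: "ydom q = ydom q'"
  obtain a b z where q: "q = (a,b,z)" by (cases q)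
  obtain a' b' z' where q': "q' = (a',b',z')" by (cases q')
  have "q \<in> ydom q" "q' \<in> ydom q'" by (auto simp: ydom_def q q')
  then have "q \<in> ydom q'" "q' \<in> ydom q" using h by auto
  then show ?thesis by (auto simp: ydom_def q q')
qed
lemma hslab_ne_zdom: "hslab q \<noteq> zdom v"
proof
  assume h: "hslab q = zdom v"
  obtain a b z where q: "q = (a,b,z)" by (cases q)
  have "(a,b,z) \<in> hslab q" "(a+1,b,z) \<in> hslab q" by (auto simp: hslab_def q)
  then have "(a,b,z) \<in> zdom v" "(a+1,b,z) \<in> zdom v" using h by auto
  then show False by (cases v) (auto simp: zdom_def)
qed
lemma ydom_ne_xdom: "ydom p \<noteq> xdom p'"
proof
  assume h: "ydom p = xdom p'"
  obtain a b z where q: "p = (a,b,z)" by (cases p)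
  have "(a,b,z) \<in> ydom p" "(a,b+1,z) \<in> ydom p" by (auto simp: ydom_def q)
  then have "(a,b,z) \<in> xdom p'" "(a,b+1,z) \<in> xdom p'" using h by auto
  then show False by (cases p') (auto simp: xdom_def)
qed
lemma ydom_ne_zdom: "ydom p \<noteq> zdom p'"
proof
  assume h: "ydom p = zdom p'"
  obtain a b z where q: "p = (a,b,z)" by (cases p)
  have "(a,b,z) \<in> ydom p" "(a,b+1,z) \<in> ydom p" by (auto simp: ydom_def q)
  then have "(a,b,z) \<in> zdom p'" "(a,b+1,z) \<in> zdom p'" using h by auto
  then show False by (cases p') (auto simp: zdom_def)
qed
lemma zdom_ne_xdom: "zdom p \<noteq> xdom p'"
proof
  assume h: "zdom p = xdom p'"
  obtain a b z where q: "p = (a,b,z)" by (cases p)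
  have "(a,b,z) \<in> zdom p" "(a,b,z+1) \<in> zdom p" by (auto simp: zdom_def q)
  then have "(a,b,z) \<in> xdom p'" "(a,b,z+1) \<in> xdom p'" using h by auto
  then show False by (cases p') (auto simp: xdom_def)
qed

lemma rot_inj: "par v = par v' \<Longrightarrow> rot v = rot v' \<Longrightarrow> v = v'"
proof -
  assume p: "par v = par v'" and r: "rot v = rot v'"
  obtain x y z where v: "v = (x,y,z)" by (cases v)
  obtain x' y' z' where v': "v' = (x',y',z')" by (cases v')
  have A: "(x+y) div 2 = (x'+y') div 2" and B: "(y-x) div 2 = (y'-x') div 2" and Z: "z = z'"
    using r by (auto simp: v v' rot_def)
  have P: "even (x+y) = even (x'+y')" using p unfolding v v' par_def by (simp only: prod.case)
  have "x + y = x' + y'" using A P by presburger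
  moreover have "y - x = y' - x'" using B P by presburger
  ultimately show ?thesis using Z v v' by simp
qed
lemma rho_inj: "par v = par v' \<Longrightarrow> rho v = rho v' \<Longrightarrow> v = v'"
proof -
  assume p: "par v = par v'" and r: "rho v = rho v'"
  obtain x y z where v: "v = (x,y,z)" by (cases v)
  obtain x' y' z' where v': "v' = (x',y',z')" by (cases v')
  have "par (x+1,y,z) = par (x'+1,y',z')" using p unfolding v v' par_def by (simp only: prod.case) presburger
  then have "(x+1,y,z) = (x'+1,y',z')" by (rule rot_inj) (use r in \<open>simp add: v v' rho_def\<close>)
  then show ?thesis using v v' by simp
qed

lemma hk: "{c\<in>hslab (a,b,z). par c = \<beta>} =
   (if even (a+b) = \<beta> then {(a,b,z),(a+1,b+1,z)} else {(a+1,b,z),(a,b+1,z)})"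
  by (auto simp: hslab_def par_def; presburger)
lemma rot_x: "rot ` {(a,b,z),(a+1,b+1,z)} = xdom (rot (a,b,z))"
proof -
  have "(a + 1 + (b + 1)) div 2 = (a+b) div 2 + 1" "b + 1 - (a + 1) = b - a" by presburger+
  then show ?thesis by (simp add: rot_def xdom_def)
qed
lemma rot_y: "rot ` {(a+1,b,z),(a,b+1,z)} = ydom (rho (a,b,z))"
proof -
  obtain X Y W where r: "rot (a+1,b,z) = (X,Y,W)" by (cases "rot (a+1,b,z)")
  have r1: "rot (a,b+1,z) = (X,Y+1,W)"
  proof -
    have "X = (a+1+b) div 2" "Y = (b-(a+1)) div 2" "W = z" using r by (auto simp: rot_def)
    then show ?thesis by (simp add: rot_def; presburger)
  qed
  show ?thesis using r r1 by (simp add: rho_def ydom_def)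
qed
lemma zk: "{c\<in>zdom v. par c = \<beta>} = (if par v = \<beta> then zdom v else {})"
  by (cases v) (auto simp: zdom_def par_def)
lemma rot_z: "rot ` zdom v = zdom (rot v)"
  by (cases v) (simp add: rot_def zdom_def)


lemma in_hslab: "q \<in> hslab q" by (cases q) (simp add: hslab_def)
lemma in_zdom: "v \<in> zdom v" "up v \<in> zdom v" by (cases v; simp add: zdom_def up_def)+
lemma zdom_up: "zdom v = {v, up v}" "v \<noteq> up v" by (cases v; auto simp: zdom_def up_def)+

lemma tile_sub: "mixed_tiling t R \<Longrightarrow> T \<in> t \<Longrightarrow> T \<subseteq> R"
  unfolding mixed_tiling_def is_tiling_def by blast

lemma tile_cases: "mixed_tiling t R \<Longrightarrow> T \<in> t \<Longrightarrow> (\<exists>q. T = hslab q) \<or> (\<exists>v. T = zdom v)"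
  unfolding mixed_tiling_def by blast

lemma tiles: "mixed_tiling t R \<Longrightarrow> t = hslab ` {q. hslab q \<in> t} \<union> zdom ` {v. zdom v \<in> t}"
proof (intro equalityI subsetI)
  fix T assume mt: "mixed_tiling t R" and T: "T \<in> t"
  then have "(\<exists>p. T = hslab p) \<or> (\<exists>p. T = zdom p)" unfolding mixed_tiling_def by blast
  then show "T \<in> hslab ` {q. hslab q \<in> t} \<union> zdom ` {v. zdom v \<in> t}" using T by blast
qed auto

lemma decomp:
  assumes mt: "mixed_tiling t R" and fR: "finite R"
  shows "(\<Sum>e\<in>R. h e) = (\<Sum>q\<in>{q. hslab q \<in> t}. \<Sum>e\<in>hslab q. h e) + (\<Sum>v\<in>{v. zdom v \<in> t}. h v + h (up v))"
proof -
  let ?H = "{q. hslab q \<in> t}" and ?Z = "{v. zdom v \<in> t}"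
  have U: "\<Union> t = R" and dj: "\<forall>A\<in>t. \<forall>B\<in>t. A \<noteq> B \<longrightarrow> A \<inter> B = {}"
    using mt unfolding mixed_tiling_def is_tiling_def by auto
  have ft: "finite t" proof -
    have "t \<subseteq> Pow R" using U by blast
    then show ?thesis using fR by (simp add: finite_subset)
  qed
  have fT: "\<forall>A\<in>t. finite A" using U fR by (meson Union_upper finite_subset)
  have "(\<Sum>e\<in>R. h e) = (\<Sum>T\<in>t. \<Sum>e\<in>T. h e)"
    using sum.Union_disjoint[OF fT dj, of h] U by simp
  also have "t = hslab ` ?H \<union> zdom ` ?Z" using tiles[OF mt] .
  also have "(\<Sum>T\<in>hslab ` ?H \<union> zdom ` ?Z. \<Sum>e\<in>T. h e) =
      (\<Sum>T\<in>hslab ` ?H. \<Sum>e\<in>T. h e) + (\<Sum>T\<in>zdom ` ?Z. \<Sum>e\<in>T. h e)"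
  proof (rule sum.union_disjoint)
    show "finite (hslab ` ?H)" "finite (zdom ` ?Z)" using ft by (auto intro: finite_subset)
    show "hslab ` ?H \<inter> zdom ` ?Z = {}" using hslab_ne_zdom by blast
  qed
  also have "(\<Sum>T\<in>hslab ` ?H. \<Sum>e\<in>T. h e) = (\<Sum>q\<in>?H. \<Sum>e\<in>hslab q. h e)"
    by (rule sum.reindex_cong[where l=hslab]) (auto intro: inj_onI hslab_inj)
  also have "(\<Sum>T\<in>zdom ` ?Z. \<Sum>e\<in>T. h e) = (\<Sum>v\<in>?Z. \<Sum>e\<in>zdom v. h e)"
    by (rule sum.reindex_cong[where l=zdom]) (auto intro: inj_onI zdom_inj)
  also have "\<dots> = (\<Sum>v\<in>?Z. h v + h (up v))"
    by (rule sum.cong) (auto simp: zdom_up)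
  finally show ?thesis .
qed

definition kap :: "bool \<Rightarrow> cube set \<Rightarrow> cube set" where "kap \<beta> R = {c\<in>R. par c = \<beta>}"

lemma img_h: "rot ` {c\<in>hslab q. par c = \<beta>} = (if par q = \<beta> then xdom (rot q) else ydom (rho q))"
proof -
  obtain a b z where q: "q = (a,b,z)" by (cases q)
  have p: "par q = even (a+b)" unfolding q par_def by (simp only: prod.case)
  show ?thesis
  proof (cases "even (a+b) = \<beta>")
    case True
    then have "{c\<in>hslab q. par c = \<beta>} = {(a,b,z),(a+1,b+1,z)}" unfolding q hk by simp
    then show ?thesis using True p q rot_x by simp
  next
    case False
    then have "{c\<in>hslab q. par c = \<beta>} = {(a+1,b,z),(a,b+1,z)}" unfolding q hk by simp
    then show ?thesis using False p q rot_y by simp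
  qed
qed
lemma ne_h: "{c\<in>hslab q. par c = \<beta>} \<noteq> {}"
  by (cases q) (simp add: hk)
lemma img_z: "rot ` {c\<in>zdom v. par c = \<beta>} = (if par v = \<beta> then zdom (rot v) else {})"
  by (simp add: zk rot_z)

lemma transform_eq:
  assumes mt: "mixed_tiling t R"
  shows "transform (kap \<beta> R) t = (\<lambda>T. rot ` {c\<in>T. par c = \<beta>}) ` {T\<in>t. {c\<in>T. par c = \<beta>} \<noteq> {}}"
proof -
  have e: "T \<inter> kap \<beta> R = {c\<in>T. par c = \<beta>}" if "T \<in> t" for T
    using tile_sub[OF mt that] by (auto simp: kap_def)
  have s: "{T\<in>t. T \<inter> kap \<beta> R \<noteq> {}} = {T\<in>t. {c\<in>T. par c = \<beta>} \<noteq> {}}"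
    by (intro Collect_cong) (metis e)
  show ?thesis unfolding transform_def
    by (rule image_cong[OF s]) (simp add: e)
qed

lemma YS:
  assumes mt: "mixed_tiling t R"
  shows "{p. ydom p \<in> transform (kap \<beta> R) t} = rho ` {q. hslab q \<in> t \<and> par q \<noteq> \<beta>}"
proof (intro set_eqI iffI)
  fix p assume "p \<in> {p. ydom p \<in> transform (kap \<beta> R) t}"
  then have "ydom p \<in> (\<lambda>T. rot ` {c\<in>T. par c = \<beta>}) ` {T\<in>t. {c\<in>T. par c = \<beta>} \<noteq> {}}"
    unfolding transform_eq[OF mt] by simp
  then obtain T where T0: "T \<in> {T\<in>t. {c\<in>T. par c = \<beta>} \<noteq> {}}" and T3: "ydom p = rot ` {c\<in>T. par c = \<beta>}"
    by (rule imageE)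
  then have T: "T \<in> t" "{c\<in>T. par c = \<beta>} \<noteq> {}" "ydom p = rot ` {c\<in>T. par c = \<beta>}" by auto
  from tile_cases[OF mt T(1)] obtain q v where "T = hslab q \<or> T = zdom v" by blast
  then consider "T = hslab q" "hslab q \<in> t" | "T = zdom v" "zdom v \<in> t" using T(1) by blast
  then show "p \<in> rho ` {q. hslab q \<in> t \<and> par q \<noteq> \<beta>}"
  proof cases
    case 1
    show ?thesis
    proof (cases "par q = \<beta>")
      case True then show ?thesis using T(3) 1 by (simp add: img_h ydom_ne_xdom)
    next
      case False
      then have "ydom p = ydom (rho q)" using T(3) 1 by (simp add: img_h)
      then have "p = rho q" by (rule ydom_inj)
      then show ?thesis using 1 False by blast
    qed
  next
    case 2
    have "par v = \<beta>" using T(2) 2 by (auto simp: zk split: if_splits)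
    then have "ydom p = zdom (rot v)" using T(3) 2 by (simp add: img_z)
    then show ?thesis using ydom_ne_zdom by blast
  qed
next
  fix p assume "p \<in> rho ` {q. hslab q \<in> t \<and> par q \<noteq> \<beta>}"
  then obtain q where q: "p = rho q" "hslab q \<in> t" "par q \<noteq> \<beta>" by blast
  have eq: "ydom p = rot ` {c\<in>hslab q. par c = \<beta>}" using q by (simp add: img_h)
  have m: "hslab q \<in> {T\<in>t. {c\<in>T. par c = \<beta>} \<noteq> {}}" using q(2) ne_h by simp
  have "ydom p \<in> (\<lambda>T. rot ` {c\<in>T. par c = \<beta>}) ` {T\<in>t. {c\<in>T. par c = \<beta>} \<noteq> {}}"
    by (rule image_eqI[where f="\<lambda>T. rot ` {c\<in>T. par c = \<beta>}", OF eq m])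
  then show "p \<in> {p. ydom p \<in> transform (kap \<beta> R) t}"
    unfolding transform_eq[OF mt] by simp
qed

lemma ZS:
  assumes mt: "mixed_tiling t R"
  shows "{p. zdom p \<in> transform (kap \<beta> R) t} = rot ` {v. zdom v \<in> t \<and> par v = \<beta>}"
proof (intro set_eqI iffI)
  fix p assume "p \<in> {p. zdom p \<in> transform (kap \<beta> R) t}"
  then have "zdom p \<in> (\<lambda>T. rot ` {c\<in>T. par c = \<beta>}) ` {T\<in>t. {c\<in>T. par c = \<beta>} \<noteq> {}}"
    unfolding transform_eq[OF mt] by simp
  then obtain T where T0: "T \<in> {T\<in>t. {c\<in>T. par c = \<beta>} \<noteq> {}}" and T3: "zdom p = rot ` {c\<in>T. par c = \<beta>}"
    by (rule imageE)
  then have T: "T \<in> t" "{c\<in>T. par c = \<beta>} \<noteq> {}" "zdom p = rot ` {c\<in>T. par c = \<beta>}" by auto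
  from tile_cases[OF mt T(1)] obtain q v where "T = hslab q \<or> T = zdom v" by blast
  then consider "T = hslab q" "hslab q \<in> t" | "T = zdom v" "zdom v \<in> t" using T(1) by blast
  then show "p \<in> rot ` {v. zdom v \<in> t \<and> par v = \<beta>}"
  proof cases
    case 1
    have "zdom p = xdom (rot q) \<or> zdom p = ydom (rho q)" using T(3) 1 by (simp add: img_h)
    then show ?thesis using ydom_ne_zdom zdom_ne_xdom by metis
  next
    case 2
    then have pv: "par v = \<beta>" using T(2) by (auto simp: zk split: if_splits)
    then have "zdom p = zdom (rot v)" using T(3) 2 by (simp add: img_z)
    then have "p = rot v" by (rule zdom_inj)
    then show ?thesis using 2 pv by blast
  qed
next
  fix p assume "p \<in> rot ` {v. zdom v \<in> t \<and> par v = \<beta>}"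
  then obtain v where v: "p = rot v" "zdom v \<in> t" "par v = \<beta>" by blast
  have eq: "zdom p = rot ` {c\<in>zdom v. par c = \<beta>}" using v by (simp add: img_z)
  have "{c\<in>zdom v. par c = \<beta>} \<noteq> {}" using v in_zdom(1) by blast
  then have m: "zdom v \<in> {T\<in>t. {c\<in>T. par c = \<beta>} \<noteq> {}}" using v(2) by simp
  have "zdom p \<in> (\<lambda>T. rot ` {c\<in>T. par c = \<beta>}) ` {T\<in>t. {c\<in>T. par c = \<beta>} \<noteq> {}}"
    by (rule image_eqI[where f="\<lambda>T. rot ` {c\<in>T. par c = \<beta>}", OF eq m])
  then show "p \<in> {p. zdom p \<in> transform (kap \<beta> R) t}"
    unfolding transform_eq[OF mt] by simp
qed

lemma Tw_formula:
  assumes mt: "mixed_tiling t R"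
  shows "Tw_kappa (kap \<beta> R) t = real_of_int (\<Sum>q\<in>{q. hslab q \<in> t \<and> par q \<noteq> \<beta>}. \<Sum>v\<in>{v. zdom v \<in> t \<and> par v = \<beta>}. Gq q v) / 4"
proof -
  let ?H = "{q. hslab q \<in> t \<and> par q \<noteq> \<beta>}" and ?Z = "{v. zdom v \<in> t \<and> par v = \<beta>}"
  have i1: "inj_on rho ?H" by (rule inj_onI) (rule rho_inj, auto)
  have i2: "inj_on rot ?Z" by (rule inj_onI) (rule rot_inj, auto)
  have "(\<Sum>p0\<in>rho ` ?H. \<Sum>p1\<in>rot ` ?Z. effect p0 p1) = (\<Sum>q\<in>?H. \<Sum>p1\<in>rot ` ?Z. effect (rho q) p1)"
    by (rule sum.reindex[OF i1, unfolded comp_def])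
  also have "\<dots> = (\<Sum>q\<in>?H. \<Sum>v\<in>?Z. effect (rho q) (rot v))"
    by (rule sum.cong[OF refl]) (rule sum.reindex[OF i2, unfolded comp_def])
  also have "\<dots> = (\<Sum>q\<in>?H. \<Sum>v\<in>?Z. Gq q v)"
    by (rule sum.cong[OF refl], rule sum.cong[OF refl]) (auto intro: Gq_effect)
  finally show ?thesis
    unfolding Tw_kappa_def twist_def YS[OF mt] ZS[OF mt] by simp
qed


lemma finite_cyl: "finite D \<Longrightarrow> finite (cylinder D N)"
proof -
  assume fD: "finite D"
  have "cylinder D N \<subseteq> (\<lambda>(p,z). (fst p, snd p, z)) ` (D \<times> {0..<int N})"
  proof
    fix e assume "e \<in> cylinder D N"
    then obtain x y z where e: "e = (x,y,z)" "(x,y) \<in> D" "0 \<le> z" "z < int N"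
      unfolding cylinder_def by auto
    then show "e \<in> (\<lambda>(p,z). (fst p, snd p, z)) ` (D \<times> {0..<int N})"
      by (intro image_eqI[where x="((x,y),z)"]) auto
  qed
  moreover have "finite ((\<lambda>(p,z). (fst p, snd p, z)) ` (D \<times> {0..<int N}))"
    using fD by simp
  ultimately show ?thesis by (rule finite_subset)
qed

lemma floor_sum:
  assumes fD: "finite D" and w: "0 \<le> w" "w < int N"
  shows "(\<Sum>e\<in>cylinder D N. kk e (c,d,w)) = (\<Sum>p\<in>D. kf (c - fst p) (d - snd p))"
proof -
  have fR: "finite (cylinder D N)" using fD by (rule finite_cyl)
  have "(\<Sum>e\<in>cylinder D N. kk e (c,d,w)) = (\<Sum>e\<in>{e\<in>cylinder D N. snd (snd e) = w}. kk e (c,d,w))"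
    by (rule sum.mono_neutral_right) (auto simp: fR kk_def split: prod.splits)
  also have "{e\<in>cylinder D N. snd (snd e) = w} = (\<lambda>p. (fst p, snd p, w)) ` D"
  proof (intro equalityI subsetI)
    fix e assume "e \<in> {e\<in>cylinder D N. snd (snd e) = w}"
    then obtain x y where e: "e = (x,y,w)" "(x,y) \<in> D" unfolding cylinder_def by auto
    then show "e \<in> (\<lambda>p. (fst p, snd p, w)) ` D" by (intro image_eqI[where x="(x,y)"]) auto
  next
    fix e assume "e \<in> (\<lambda>p. (fst p, snd p, w)) ` D"
    then show "e \<in> {e\<in>cylinder D N. snd (snd e) = w}" using w by (auto simp: cylinder_def)
  qed
  also have "(\<Sum>e\<in>(\<lambda>p. (fst p, snd p, w)) ` D. kk e (c,d,w)) = (\<Sum>p\<in>D. kf (c - fst p) (d - snd p))"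
    by (subst sum.reindex) (auto simp: inj_on_def kk_def split: prod.splits)
  finally show ?thesis .
qed

lemma main_zero:
  assumes mt: "mixed_tiling t (cylinder D N)" and fD: "finite D"
  shows "(\<Sum>q\<in>{q. hslab q \<in> t}. \<Sum>v\<in>{v. zdom v \<in> t}. Gq q v) = 0"
proof -
  let ?R = "cylinder D N" and ?H = "{q. hslab q \<in> t}" and ?Z = "{v. zdom v \<in> t}"
  have fR: "finite ?R" using fD by (rule finite_cyl)
  have ZR: "v \<in> ?R" "up v \<in> ?R" if "v \<in> ?Z" for v
    using tile_sub[OF mt] that in_zdom by blast+
  have HR: "q \<in> ?R" if "q \<in> ?H" for q
    using tile_sub[OF mt] that in_hslab by blast
  have fZ: "finite ?Z" using ZR(1) fR by (meson finite_subset subsetI)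
  have fH: "finite ?H" using HR fR by (meson finite_subset subsetI)
  define \<Delta> where "\<Delta> v e = kk e v - kk e (up v)" for v e
  have A: "(\<Sum>e\<in>?R. \<Delta> v e) = 0" if v: "v \<in> ?Z" for v
  proof -
    obtain c d w where vv: "v = (c,d,w)" by (cases v)
    have "0 \<le> w" "w < int N" "w + 1 < int N"
      using ZR[OF v] by (auto simp: vv up_def cylinder_def)
    then have "(\<Sum>e\<in>?R. kk e v) = (\<Sum>e\<in>?R. kk e (up v))"
      using floor_sum[OF fD, where w=w and c=c and d=d and N=N] floor_sum[OF fD, where w="w+1" and c=c and d=d and N=N] by (simp add: vv up_def)
    then show ?thesis unfolding \<Delta>_def by (simp add: sum_subtractf)
  qed
  have B: "(\<Sum>v\<in>?Z. \<Sum>u\<in>?Z. \<Delta> v u + \<Delta> v (up u)) = 0"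
  proof -
    have "(\<Sum>v\<in>?Z. \<Sum>u\<in>?Z. \<Delta> v u + \<Delta> v (up u)) = (\<Sum>v\<in>?Z. \<Sum>u\<in>?Z. kk (up u) v - kk u (up v))"
      unfolding \<Delta>_def by (intro sum.cong refl) (simp add: kk_up)
    also have "\<dots> = (\<Sum>v\<in>?Z. \<Sum>u\<in>?Z. kk (up u) v) - (\<Sum>v\<in>?Z. \<Sum>u\<in>?Z. kk u (up v))"
      by (simp add: sum_subtractf)
    also have "(\<Sum>v\<in>?Z. \<Sum>u\<in>?Z. kk (up u) v) = (\<Sum>u\<in>?Z. \<Sum>v\<in>?Z. kk (up u) v)"
      by (rule sum.swap)
    also have "\<dots> = (\<Sum>u\<in>?Z. \<Sum>v\<in>?Z. kk v (up u))"
      by (intro sum.cong refl) (rule kk_sym)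
    finally show ?thesis by simp
  qed
  have "(\<Sum>q\<in>?H. \<Sum>v\<in>?Z. Gq q v) = (\<Sum>v\<in>?Z. \<Sum>q\<in>?H. \<Sum>e\<in>hslab q. \<Delta> v e)"
    unfolding Gq_def \<Delta>_def by (rule sum.swap)
  also have "\<dots> = (\<Sum>v\<in>?Z. (\<Sum>e\<in>?R. \<Delta> v e) - (\<Sum>u\<in>?Z. \<Delta> v u + \<Delta> v (up u)))"
    by (intro sum.cong refl) (simp add: decomp[OF mt fR])
  also have "\<dots> = (\<Sum>v\<in>?Z. - (\<Sum>u\<in>?Z. \<Delta> v u + \<Delta> v (up u)))"
    by (intro sum.cong refl) (simp add: A)
  also have "\<dots> = 0" using B by (simp add: sum_negf)
  finally show ?thesis .
qed

theorem lemma4p1: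
  fixes D :: "(int \<times> int) set" and N :: nat and t :: "cube set set"
  assumes "planar_domain D"
    and "mixed_tiling t (cylinder D N)"
  shows "Tw_kappa (kappa_even (cylinder D N)) t = - Tw_kappa (kappa_odd (cylinder D N)) t"
proof -
  let ?R = "cylinder D N" and ?H = "{q. hslab q \<in> t}" and ?Z = "{v. zdom v \<in> t}"
  have mt: "mixed_tiling t ?R" by fact
  have fD: "finite D" using assms(1) unfolding planar_domain_def by blast
  have fR: "finite ?R" using fD by (rule finite_cyl)
  have "?Z \<subseteq> ?R" using tile_sub[OF mt] in_zdom by blast
  then have fZ: "finite ?Z" using fR by (rule finite_subset)
  have "?H \<subseteq> ?R" using tile_sub[OF mt] in_hslab by blast
  then have fH: "finite ?H" using fR by (rule finite_subset)
  have ke: "kappa_even ?R = kap True ?R" unfolding kappa_even_def kap_def par_def by simp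
  have ko: "kappa_odd ?R = kap False ?R" unfolding kappa_odd_def kap_def par_def by (auto split: prod.splits)
  define F where "F q = (\<Sum>v\<in>{v\<in>?Z. par v \<noteq> par q}. Gq q v)" for q
  have inner: "(\<Sum>v\<in>?Z. Gq q v) = F q" for q
    unfolding F_def
    by (rule sum.mono_neutral_right) (auto simp: fZ Gq_zero)
  have split: "?H = {q\<in>?H. par q} \<union> {q\<in>?H. \<not> par q}" by auto
  have "(\<Sum>q\<in>?H. F q) = (\<Sum>q\<in>{q\<in>?H. par q}. F q) + (\<Sum>q\<in>{q\<in>?H. \<not> par q}. F q)"
    by (subst split, rule sum.union_disjoint) (use fH in auto)
  moreover have "(\<Sum>q\<in>?H. F q) = 0" using main_zero[OF mt fD] inner by simp
  moreover have "(\<Sum>q\<in>{q\<in>?H. par q}. F q) = (\<Sum>q\<in>{q. hslab q \<in> t \<and> par q \<noteq> False}. \<Sum>v\<in>{v. zdom v \<in> t \<and> par v = False}. Gq q v)"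
    unfolding F_def by (intro sum.cong) auto
  moreover have "(\<Sum>q\<in>{q\<in>?H. \<not> par q}. F q) = (\<Sum>q\<in>{q. hslab q \<in> t \<and> par q \<noteq> True}. \<Sum>v\<in>{v. zdom v \<in> t \<and> par v = True}. Gq q v)"
    unfolding F_def by (intro sum.cong) auto
  ultimately have AB: "(\<Sum>q\<in>{q. hslab q \<in> t \<and> par q \<noteq> True}. \<Sum>v\<in>{v. zdom v \<in> t \<and> par v = True}. Gq q v)
     = - (\<Sum>q\<in>{q. hslab q \<in> t \<and> par q \<noteq> False}. \<Sum>v\<in>{v. zdom v \<in> t \<and> par v = False}. Gq q v)"
    by linarith
  show ?thesis
    unfolding ke ko Tw_formula[OF mt] AB by simp
qed

end
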